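(* For all $\alpha\in(0,\pi/4]$, $\beta_0(\alpha)>t(\alpha)$, where $\beta_0(\alpha)=\tfrac12\arccos\!\left(\frac{-2\cos(4\alpha)+\cos(6\alpha)+2}{3-2\cos(4\alpha)}\right)$ and $t(\alpha)=\arctan\!\left(\frac{\sin(3\alpha)-\sin\alpha}{3\cos\alpha-\cos(3\alpha)}\right)$. *)

theory Defs
  imports Complex_Main
begin

definition beta0 :: "real \<Rightarrow> real" where
  "beta0 \<alpha> = (1/2) * arccos ((- 2 * cos (4 * \<alpha>) + cos (6 * \<alpha>) + 2) / (3 - 2 * cos (4 * \<alpha>)))"

definition tfun :: "real \<Rightarrow> real" where
  "tfun \<alpha> = arctan ((sin (3 * \<alpha>) - sin \<alpha>) / (3 * cos \<alpha> - cos (3 * \<alpha>)))"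

end

theory Submission
  imports Defs
begin

lemma key_ineq:
  fixes c :: real
  assumes "0 \<le> c" "c < 1"
  shows "(4*c^3-4*c^2-3*c+4)/(5-4*c^2) < (2-2*c^2+c^3)/(2-c^2)"
proof -
  have "c^2 \<le> 1" using assms by (simp add: power_le_one)
  then have d1: "5-4*c^2 > 0" by linarith
  have d2: "2-c^2 > 0" using \<open>c^2 \<le> 1\<close> by linarith
  have p: "(1-c)*(1+4*c+c^2-2*c^3) > 0"
  proof -
    have "c*c^2 \<le> c*1" using assms \<open>c^2 \<le> 1\<close> by (intro mult_left_mono) auto
    then have "c^3 \<le> c" by (simp add: power3_eq_cube power2_eq_square)
    moreover have "c^2 \<ge> 0" by simp
    ultimately have "1+4*c+c^2-2*c^3 > 0" using assms by linarith
    then show ?thesis using assms by simp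
  qed
  have e: "(2-2*c^2+c^3)*(5-4*c^2) - (4*c^3-4*c^2-3*c+4)*(2-c^2) = 2*((1-c)*(1+4*c+c^2-2*c^3))"
    by (simp add: algebra_simps power2_eq_square power3_eq_cube) 
  have "(4*c^3-4*c^2-3*c+4)*(2-c^2) < (2-2*c^2+c^3)*(5-4*c^2)" using e p by linarith
  then show ?thesis using d1 d2 by (simp add: divide_simps)
qed

lemma lower_ineq:
  fixes c :: real
  assumes "0 \<le> c" "c < 1"
  shows "-1 \<le> (4*c^3-4*c^2-3*c+4)/(5-4*c^2)"
proof -
  have "c^2 \<le> 1" using assms by (simp add: power_le_one)
  then have d1: "5-4*c^2 > 0" by linarith
  have e: "(4*c^3-4*c^2-3*c+4) + (5-4*c^2) = 2 + (1-c)*(7+4*c-4*c^2)"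
    by (simp add: algebra_simps power2_eq_square power3_eq_cube)
  have "c*c \<le> c*1" using assms by (intro mult_left_mono) auto
  then have "c^2 \<le> c" by (simp add: power2_eq_square)
  then have "(1-c)*(7+4*c-4*c^2) \<ge> 0" using assms by simp
  then have "-(5-4*c^2) \<le> (4*c^3-4*c^2-3*c+4)" using e by linarith
  then show ?thesis using d1 by (simp add: divide_simps)
qed

lemma frac_lem:
  fixes A B :: real
  assumes "B > 0" "A \<ge> 0"
  shows "(1 - A/B)/(1 + A/B) = (B-A)/(B+A)"
proof -
  have "1 - A/B = (B-A)/B" "1 + A/B = (B+A)/B" using assms by (auto simp: field_simps)
  then show ?thesis using assms by simp
qed

theorem mainTheorem15:
  fixes \<alpha> :: real
  assumes "0 < \<alpha>" and "\<alpha> \<le> pi / 4"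
  shows "beta0 \<alpha> > tfun \<alpha>"
proof -
  define c where "c = cos (2*\<alpha>)"
  define s where "s = sin \<alpha>"
  define x where "x = cos \<alpha>"
  have sx: "s^2 + x^2 = 1" unfolding s_def x_def by simp
  have cdef: "c = x^2 - s^2" unfolding c_def x_def s_def by (simp add: cos_double)
  have c0: "0 \<le> c" unfolding c_def by (rule cos_ge_zero) (use assms in auto)
  have s0: "s > 0" unfolding s_def by (rule sin_gt_zero) (use assms in auto)
  have x0: "x > 0" unfolding x_def by (rule cos_gt_zero) (use assms in auto)
  have "s^2 > 0" using s0 by simp
  then have c1: "c < 1" using cdef sx by linarith
  have cos4: "cos (4*\<alpha>) = 2*c^2-1"
    using cos_double[of "2*\<alpha>"] unfolding c_def by (simp add: sin_squared_eq)
  have cos6: "cos (6*\<alpha>) = 4*c^3-3*c"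
    using cos_treble_cos[of "2*\<alpha>"] unfolding c_def by simp
  have s2: "sin (2*\<alpha>) = 2*s*x" unfolding s_def x_def by (simp add: sin_double)
  have sin3: "sin (3*\<alpha>) = 2*s*x*x + c*s"
    using sin_add[of "2*\<alpha>" \<alpha>] s2 unfolding c_def s_def x_def by (simp add: algebra_simps)
  have cos3: "cos (3*\<alpha>) = c*x - 2*s*x*s"
    using cos_add[of "2*\<alpha>" \<alpha>] s2 unfolding c_def s_def x_def by (simp add: algebra_simps)
  have n1: "sin (3*\<alpha>) - sin \<alpha> = s*(2*x^2 + c - 1)"
    using sin3 unfolding s_def[symmetric] by (simp add: algebra_simps power2_eq_square)
  have n2: "2*x^2 + c - 1 = 2*c" using cdef sx by linarith
  have num: "sin (3*\<alpha>) - sin \<alpha> = 2*c*s" using n1 n2 by simp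
  have d1: "3*cos \<alpha> - cos (3*\<alpha>) = x*(3 - c + 2*s^2)"
    using cos3 unfolding x_def[symmetric] by (simp add: algebra_simps power2_eq_square)
  have d2: "3 - c + 2*s^2 = 4 - 2*c" using cdef sx by linarith
  have den: "3*cos \<alpha> - cos (3*\<alpha>) = x*(4-2*c)" using d1 d2 by simp
  define u where "u = c*s/(x*(2-c))"
  have uu: "(sin (3*\<alpha>) - sin \<alpha>) / (3*cos \<alpha> - cos (3*\<alpha>)) = u"
    unfolding num den u_def using x0 c1 by (simp add: field_simps)
  have u0: "u \<ge> 0" unfolding u_def using c0 s0 x0 c1 by simp
  define t where "t = arctan u"
  have tf: "tfun \<alpha> = t" unfolding tfun_def uu t_def ..
  have t0: "0 \<le> t" unfolding t_def using u0 by simp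
  have t1: "2*t \<le> pi" unfolding t_def using arctan_ubound[of u] by simp
  have "u^2 \<ge> 0" by simp
  then have pos: "1 + u^2 > 0" by linarith
  have cos2t: "cos (2*t) = (1-u^2)/(1+u^2)"
    unfolding t_def cos_double cos_arctan sin_arctan using pos
    by (simp add: power_divide divide_simps)
  have x2: "x^2 = (1+c)/2" and ss2: "s^2 = (1-c)/2" using cdef sx by auto
  have u2a: "u^2 = c^2*s^2/(x^2*(2-c)^2)" by (simp add: u_def power_divide power_mult_distrib)
  have u2: "u^2 = c^2*(1-c)/((1+c)*(2-c)^2)"
    unfolding u2a x2 ss2 by (simp add: divide_simps)
  have cval: "cos (2*t) = (2-2*c^2+c^3)/(2-c^2)"
  proof -
    have a: "(1+c)*(2-c)^2 > 0" using c0 c1 by simp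
    have e1: "(1+c)*(2-c)^2 - c^2*(1-c) = 2*(2-2*c^2+c^3)"
      by (simp add: algebra_simps power2_eq_square power3_eq_cube)
    have e2: "(1+c)*(2-c)^2 + c^2*(1-c) = 2*(2-c^2)"
      by (simp add: algebra_simps power2_eq_square power3_eq_cube)
    have "(1-u^2)/(1+u^2) = ((1+c)*(2-c)^2 - c^2*(1-c))/((1+c)*(2-c)^2 + c^2*(1-c))"
      unfolding u2 by (rule frac_lem[OF a]) (use c0 c1 in simp)
    also have "\<dots> = (2-2*c^2+c^3)/(2-c^2)"
      unfolding e1 e2 by (rule mult_divide_mult_cancel_left) simp
    finally show ?thesis using cos2t by simp
  qed
  have arg: "(- 2 * cos (4 * \<alpha>) + cos (6 * \<alpha>) + 2) / (3 - 2 * cos (4 * \<alpha>))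
             = (4*c^3-4*c^2-3*c+4)/(5-4*c^2)"
    unfolding cos4 cos6 by (simp add: algebra_simps)
  have "arccos (cos (2*t)) < arccos ((4*c^3-4*c^2-3*c+4)/(5-4*c^2))"
    apply (rule arccos_less_arccos)
    using lower_ineq[OF c0 c1] key_ineq[OF c0 c1] cval cos_le_one[of "2*t"] by auto
  then have "2*t < arccos ((4*c^3-4*c^2-3*c+4)/(5-4*c^2))"
    using arccos_cos[of "2*t"] t0 t1 by simp
  then show ?thesis unfolding beta0_def arg tf by simp
qed

end
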